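(* Let $J:[0,1]\to[0,\infty)$ with $\int_{\mathbb{Z}_p}J(|x|_p)dx=1$ (extended by zero outside $\mathbb{Z}_p$) and $\boldsymbol{J}\varphi=J(|x|_p)\ast\varphi-\varphi$. For $l\ge1$ let $G_l=\mathbb{Z}_p/p^l\mathbb{Z}_p$ and let $\mathcal{D}_l(\mathbb{Z}_p)$ be the complex vector space spanned by $\{\Omega(p^l|x-I|_p)\}_{I\in G_l}$. Then $\boldsymbol{J}:\mathcal{D}_l(\mathbb{Z}_p)\to\mathcal{D}_l(\mathbb{Z}_p)$ is a well-defined operator, and, identifying $\varphi\in\mathcal{D}_l(\mathbb{Z}_p)$ with the column vector $[\varphi(I)]_{I\in G_l}$, the restriction of $\boldsymbol{J}$ to $\mathcal{D}_l(\mathbb{Z}_p)$ is given by the matrix $\boldsymbol{J}^{(l)}=[J^{(l)}_{I,K}]_{I,K\in G_l}$ with $J^{(l)}_{I,K}=p^{-l}J(|I-K|_p)$ if $I\neq K$, and $J^{(l)}_{I,I}=\int_{p^l\mathbb{Z}_p}J(|y|_p)dy-1$.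
   Context: $p$ is a fixed prime; Haar measure with $\int_{\mathbb{Z}_p}dx=1$. Elements of $G_l$ are represented by $p$-adic integers $I=I_0+I_1p+\dots+I_{l-1}p^{l-1}$, $I_j\in\{0,\dots,p-1\}$, and $\Omega(p^l|x-I|_p)$ is the characteristic function of the ball $I+p^l\mathbb{Z}_p$. *)

theory Defs
  imports "HOL-Probability.Probability" "HOL-Computational_Algebra.Primes"
begin

text \<open>p-adic integers are modelled by their digit sequences x :: nat => nat
  (x n \<in> {0..p-1} is the coefficient of p^n).  The normalized Haar measure on Z_p
  is the infinite product of uniform measures on the digits.\<close>

definition Zp :: "nat \<Rightarrow> (nat \<Rightarrow> nat) measure" where
  "Zp p = PiM UNIV (\<lambda>_. uniform_count_measure {..<p})"

definition zp_of_nat :: "nat \<Rightarrow> nat \<Rightarrow> (nat \<Rightarrow> nat)" where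
  "zp_of_nat p I = (\<lambda>n. I div p ^ n mod p)"

text \<open>Subtraction in Z_p: the n-th digit of x - y is determined by the truncations mod p^(n+1).\<close>
definition zp_sub :: "nat \<Rightarrow> (nat \<Rightarrow> nat) \<Rightarrow> (nat \<Rightarrow> nat) \<Rightarrow> (nat \<Rightarrow> nat)" where
  "zp_sub p x y = (\<lambda>n. nat ((((\<Sum>i\<le>n. int (x i) * int p ^ i) - (\<Sum>i\<le>n. int (y i) * int p ^ i))
                         mod (int p ^ (Suc n))) div (int p ^ n)))"

definition zp_norm :: "nat \<Rightarrow> (nat \<Rightarrow> nat) \<Rightarrow> real" where
  "zp_norm p x = (if (\<forall>n. x n = 0) then 0 else real p powr (- real (LEAST n. x n \<noteq> 0)))"

definition int_padic_norm :: "nat \<Rightarrow> int \<Rightarrow> real" where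
  "int_padic_norm p a = (if a = 0 then 0 else real p powr (- real (multiplicity (int p) a)))"

text \<open>Support of Omega(p^l |x - I|_p): the ball I + p^l Z_p.\<close>
definition zp_ball :: "nat \<Rightarrow> nat \<Rightarrow> nat \<Rightarrow> (nat \<Rightarrow> nat) set" where
  "zp_ball p l I = {x \<in> space (Zp p). zp_norm p (zp_sub p x (zp_of_nat p I)) \<le> real p powr (- real l)}"

definition zp_ideal :: "nat \<Rightarrow> nat \<Rightarrow> (nat \<Rightarrow> nat) set" where
  "zp_ideal p l = {y \<in> space (Zp p). zp_norm p y \<le> real p powr (- real l)}"

definition Jop :: "nat \<Rightarrow> (real \<Rightarrow> real) \<Rightarrow> ((nat \<Rightarrow> nat) \<Rightarrow> complex) \<Rightarrow> ((nat \<Rightarrow> nat) \<Rightarrow> complex)" where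
  "Jop p J \<phi> = (\<lambda>x. (\<integral>y. complex_of_real (J (zp_norm p (zp_sub p x y))) * \<phi> y \<partial>Zp p) - \<phi> x)"

text \<open>D_l(Z_p): complex span of the indicator functions of the balls I + p^l Z_p, I \<in> G_l
  (G_l represented by 0 <= I < p^l); functions are compared on Z_p.\<close>
definition Dl :: "nat \<Rightarrow> nat \<Rightarrow> ((nat \<Rightarrow> nat) \<Rightarrow> complex) set" where
  "Dl p l = {\<phi>. \<exists>c :: nat \<Rightarrow> complex. \<forall>x \<in> space (Zp p).
               \<phi> x = (\<Sum>I<p ^ l. c I * indicator (zp_ball p l I) x)}"

definition Jmat :: "nat \<Rightarrow> nat \<Rightarrow> (real \<Rightarrow> real) \<Rightarrow> nat \<Rightarrow> nat \<Rightarrow> real" where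
  "Jmat p l J I K = (if I = K
      then (\<integral>y. J (zp_norm p y) * indicator (zp_ideal p l) y \<partial>Zp p) - 1
      else real p powr (- real l) * J (int_padic_norm p (int I - int K)))"

end

theory Submission
  imports Defs "HOL-Number_Theory.Cong"
begin


lemma pucm: "0 < p \<Longrightarrow> prob_space (uniform_count_measure {..<(p::nat)})"
  by (rule prob_space_uniform_count_measure) auto

lemma Zp_pps: "0 < (p::nat) \<Longrightarrow> product_prob_space (\<lambda>_::nat. uniform_count_measure {..<p})"
  unfolding product_prob_space_def product_prob_space_axioms_def product_sigma_finite_def
  using pucm[of p] by (auto intro: prob_space_imp_sigma_finite)

lemma space_Zp: "space (Zp p) = {x. \<forall>n. x n < p}"
  by (auto simp: Zp_def space_PiM space_uniform_count_measure PiE_def extensional_def)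

lemma prob_Zp: "0 < p \<Longrightarrow> prob_space (Zp p)"
  unfolding Zp_def by (rule prob_space_PiM) (rule pucm)

lemma emeasure_Zp_cyl:
  assumes "0<p" "finite S" "\<And>i. i\<in>S \<Longrightarrow> A i \<subseteq> {..<p}"
  shows "emeasure (Zp p) {x \<in> space (Zp p). \<forall>i\<in>S. x i \<in> A i} = ennreal (\<Prod>i\<in>S. real (card (A i)) / real p)"
proof -
  have "{x \<in> space (Zp p). \<forall>i\<in>S. x i \<in> A i} = prod_emb UNIV (\<lambda>_. uniform_count_measure {..<p}) S (PiE S A)"
    by (auto simp: prod_emb_def Zp_def space_PiM)
  also have "emeasure (Zp p) \<dots> = (\<Prod>i\<in>S. emeasure (uniform_count_measure {..<p}) (A i))"
    unfolding Zp_def using assms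
    by (intro emeasure_PiM_emb) (auto intro: pucm simp: sets_uniform_count_measure)
  also have "\<dots> = (\<Prod>i\<in>S. ennreal (real (card (A i)) / real p))"
    using assms by (intro prod.cong refl) (simp add: emeasure_uniform_count_measure ennreal_of_nat_eq_real_of_nat divide_ennreal)
  also have "\<dots> = ennreal (\<Prod>i\<in>S. real (card (A i)) / real p)"
    by (simp add: prod_ennreal)
  finally show ?thesis .
qed

lemma coord_meas: "(\<lambda>y. g (y n)) \<in> measurable (Zp p) (count_space UNIV)"
proof -
  have "(\<lambda>y. y n) \<in> measurable (Zp p) (uniform_count_measure {..<p})"
    unfolding Zp_def by (rule measurable_component_singleton) simp
  moreover have "g \<in> measurable (uniform_count_measure {..<p}) (count_space UNIV)"
    by (subst measurable_cong_sets[OF sets_uniform_count_measure_count_space refl]) simp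
  ultimately show ?thesis by (rule measurable_compose)
qed

lemma coord_pred[measurable]: "Measurable.pred (Zp p) (\<lambda>y. y n = c)"
  using coord_meas[of "\<lambda>a. a = c" n p] by simp

definition tr :: "nat \<Rightarrow> (nat \<Rightarrow> nat) \<Rightarrow> (nat \<Rightarrow> nat) \<Rightarrow> (nat \<Rightarrow> nat)" where
  "tr p x y = (\<lambda>n. (y n + x n) mod p)"

lemma tr_meas: "0 < p \<Longrightarrow> tr p x \<in> measurable (Zp p) (Zp p)"
  apply (subst (2) Zp_def)
  apply (rule measurable_PiM_single)
   apply (auto simp: tr_def space_Zp space_uniform_count_measure)
  subgoal for A i
    using measurable_sets[OF coord_meas[of "\<lambda>a. (a + x i) mod p" i p], of "A"]
    by (simp add: vimage_def Int_def conj_commute space_Zp)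
  done

lemma card_shift:
  assumes "0 < (p::nat)" "A \<subseteq> {..<p}"
  shows "card {a \<in> {..<p}. (a + c) mod p \<in> A} = card A"
proof -
  let ?f = "\<lambda>a::nat. (a + c) mod p"
  have inj: "inj_on ?f {..<p}"
  proof (rule inj_onI)
    fix a b assume "a \<in> {..<p}" "b \<in> {..<p}" "?f a = ?f b"
    then have "[a + c = b + c] (mod p)" by (simp add: cong_def)
    then have "[a = b] (mod p)" by (simp add: cong_add_rcancel_nat)
    with \<open>a \<in> {..<p}\<close> \<open>b \<in> {..<p}\<close> show "a = b" by (simp add: cong_def)
  qed
  have im: "?f ` {..<p} = {..<p}"
    using assms inj by (intro endo_inj_surj) auto
  have "?f ` {a \<in> {..<p}. ?f a \<in> A} = A"
  proof
    show "?f ` {a \<in> {..<p}. ?f a \<in> A} \<subseteq> A" by auto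
    show "A \<subseteq> ?f ` {a \<in> {..<p}. ?f a \<in> A}"
    proof
      fix b assume b: "b \<in> A"
      then have "b \<in> ?f ` {..<p}" using im assms(2) by auto
      then obtain a where "a < p" "b = ?f a" by auto
      then show "b \<in> ?f ` {a \<in> {..<p}. ?f a \<in> A}" using b by auto
    qed
  qed
  moreover have "inj_on ?f {a \<in> {..<p}. ?f a \<in> A}"
    using inj by (rule inj_on_subset) auto
  ultimately show ?thesis using card_image by metis
qed

lemma card_shift':
  "0 < (p::nat) \<Longrightarrow> A \<subseteq> {..<p} \<Longrightarrow> card {a. a < p \<and> (a + c) mod p \<in> A} = card A"
  using card_shift[of p A c] by simp

lemma distr_tr:
  assumes p: "0 < p"
  shows "distr (Zp p) (Zp p) (tr p x) = Zp p"
proof -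
  interpret product_prob_space "\<lambda>_::nat. uniform_count_measure {..<p}" UNIV by (rule Zp_pps[OF p])
  show ?thesis
    unfolding Zp_def
  proof (rule PiM_eq)
    fix J :: "nat set" and F assume J: "finite J" and F: "\<And>j. j \<in> J \<Longrightarrow> F j \<in> sets (uniform_count_measure {..<p})"
    then have Fs: "\<And>j. j \<in> J \<Longrightarrow> F j \<subseteq> {..<p}" by (simp add: sets_uniform_count_measure)
    have emb: "\<And>G::nat \<Rightarrow> nat set. prod_emb UNIV (\<lambda>_. uniform_count_measure {..<p}) J (PiE J G) = {y \<in> space (Zp p). \<forall>i\<in>J. y i \<in> G i}"
      by (auto simp: prod_emb_def Zp_def space_PiM)
    have meas: "prod_emb UNIV (\<lambda>_. uniform_count_measure {..<p}) J (PiE J F) \<in> sets (Zp p)"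
      unfolding Zp_def using J F by (intro sets_PiM_I) auto
    have pre: "tr p x -` {y \<in> space (Zp p). \<forall>i\<in>J. y i \<in> F i} \<inter> space (Zp p)
       = {y \<in> space (Zp p). \<forall>i\<in>J. y i \<in> {a \<in> {..<p}. (a + x i) mod p \<in> F i}}"
      using p by (auto simp: tr_def space_Zp)
    have "emeasure (distr (Pi\<^sub>M UNIV (\<lambda>_. uniform_count_measure {..<p})) (Pi\<^sub>M UNIV (\<lambda>_. uniform_count_measure {..<p})) (tr p x))
         (prod_emb UNIV (\<lambda>_. uniform_count_measure {..<p}) J (PiE J F))
       = emeasure (Zp p) (tr p x -` {y \<in> space (Zp p). \<forall>i\<in>J. y i \<in> F i} \<inter> space (Zp p))"
      using meas tr_meas[OF p] unfolding Zp_def[symmetric] emb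
      by (subst emeasure_distr) auto
    also have "\<dots> = ennreal (\<Prod>i\<in>J. real (card {a \<in> {..<p}. (a + x i) mod p \<in> F i}) / real p)"
      unfolding pre by (rule emeasure_Zp_cyl[OF p J]) auto
    also have "\<dots> = ennreal (\<Prod>i\<in>J. real (card (F i)) / real p)"
      using Fs p by (intro arg_cong[where f=ennreal] prod.cong refl) (simp add: card_shift')
    also have "\<dots> = (\<Prod>i\<in>J. emeasure (uniform_count_measure {..<p}) (F i))"
      using Fs by (simp add: emeasure_uniform_count_measure ennreal_of_nat_eq_real_of_nat divide_ennreal prod_ennreal)
    finally show "emeasure (distr (Pi\<^sub>M UNIV (\<lambda>_. uniform_count_measure {..<p})) (Pi\<^sub>M UNIV (\<lambda>_. uniform_count_measure {..<p})) (tr p x))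
         (prod_emb UNIV (\<lambda>_. uniform_count_measure {..<p}) J (PiE J F)) = (\<Prod>i\<in>J. emeasure (uniform_count_measure {..<p}) (F i))" .
  qed simp
qed


definition fdist :: "nat \<Rightarrow> (nat \<Rightarrow> nat) \<Rightarrow> (nat \<Rightarrow> nat) \<Rightarrow> real" where
  "fdist p x y = (if \<forall>n. x n = y n then 0 else real p powr - real (LEAST n. x n \<noteq> y n))"

lemma zp_sub_digit_zero:
  assumes "\<forall>i\<le>n. x i = y i" shows "zp_sub p x y n = 0"
proof -
  have "(\<Sum>i\<le>n. int (x i) * int p ^ i) = (\<Sum>i\<le>n. int (y i) * int p ^ i)"
    using assms by (intro sum.cong) auto
  then show ?thesis by (simp add: zp_sub_def)
qed

lemma zp_sub_digit_nz:
  assumes p: "p > 1" and xy: "x n < p" "y n < p" "\<forall>i<n. x i = y i" "x n \<noteq> y n"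
  shows "zp_sub p x y n \<noteq> 0"
proof -
  have s: "(\<Sum>i<n. int (x i) * int p ^ i) = (\<Sum>i<n. int (y i) * int p ^ i)"
    using xy by (intro sum.cong) auto
  have "(\<Sum>i\<le>n. int (x i) * int p ^ i) - (\<Sum>i\<le>n. int (y i) * int p ^ i) = (int (x n) - int (y n)) * int p ^ n"
    using s by (simp add: lessThan_Suc_atMost[symmetric] algebra_simps)
  then have "zp_sub p x y n = nat ((((int (x n) - int (y n)) * int p ^ n) mod (int p * int p ^ n)) div int p ^ n)"
    by (simp add: zp_sub_def)
  also have "\<dots> = nat ((int (x n) - int (y n)) mod int p)"
    using p by (simp add: mod_mult_mult2 mult.commute[of "int p"])
  finally have eq: "zp_sub p x y n = nat ((int (x n) - int (y n)) mod int p)" .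
  have nz: "(int (x n) - int (y n)) mod int p \<noteq> 0"
  proof
    assume "(int (x n) - int (y n)) mod int p = 0"
    then have "int p dvd (int (x n) - int (y n))" by auto
    moreover have "int (x n) - int (y n) \<noteq> 0" using xy by simp
    ultimately have "\<bar>int p\<bar> \<le> \<bar>int (x n) - int (y n)\<bar>" by (rule dvd_imp_le_int[rotated])
    with xy show False by simp
  qed
  have "(int (x n) - int (y n)) mod int p \<ge> 0" using p by simp
  with nz eq show ?thesis by simp
qed

lemma zp_norm_sub:
  assumes p: "p > 1" and x: "x \<in> space (Zp p)" and y: "y \<in> space (Zp p)"
  shows "zp_norm p (zp_sub p x y) = fdist p x y"
proof (cases "\<forall>n. x n = y n")
  case True
  then have "\<forall>n. zp_sub p x y n = 0" by (simp add: zp_sub_digit_zero)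
  with True show ?thesis by (simp add: zp_norm_def fdist_def)
next
  case False
  define m where "m = (LEAST n. x n \<noteq> y n)"
  have m: "x m \<noteq> y m" using False LeastI_ex[of "\<lambda>n. x n \<noteq> y n"] by (auto simp: m_def)
  have lt: "\<And>i. i < m \<Longrightarrow> x i = y i" using not_less_Least m_def by blast
  have z: "\<And>n. n < m \<Longrightarrow> zp_sub p x y n = 0" using lt by (intro zp_sub_digit_zero) auto
  have nz: "zp_sub p x y m \<noteq> 0" using x y lt m p by (intro zp_sub_digit_nz) (auto simp: space_Zp)
  have "(LEAST n. zp_sub p x y n \<noteq> 0) = m"
    using z nz by (intro Least_equality) (auto simp: not_less[symmetric])
  with nz False show ?thesis by (auto simp: zp_norm_def fdist_def m_def)
qed

lemma zp_norm_fdist: "zp_norm p z = fdist p (\<lambda>_. 0) z"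
proof -
  have "(\<forall>n. z n = 0) = (\<forall>n. 0 = z n)" by auto
  moreover have "(LEAST n. z n \<noteq> 0) = (LEAST n. 0 \<noteq> z n)" by (rule arg_cong[where f=Least]) auto
  ultimately show ?thesis by (simp add: zp_norm_def fdist_def)
qed

lemma fdist_le:
  assumes p: "p > 1"
  shows "fdist p x y \<le> real p powr - real l \<longleftrightarrow> (\<forall>n<l. x n = y n)"
proof (cases "\<forall>n. x n = y n")
  case True then show ?thesis by (simp add: fdist_def)
next
  case False
  define m where "m = (LEAST n. x n \<noteq> y n)"
  have m: "x m \<noteq> y m" using False LeastI_ex[of "\<lambda>n. x n \<noteq> y n"] by (auto simp: m_def)
  have lt: "\<And>i. i < m \<Longrightarrow> x i = y i" using not_less_Least m_def by blast
  have "fdist p x y \<le> real p powr - real l \<longleftrightarrow> l \<le> m"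
    unfolding fdist_def if_not_P[OF False] m_def[symmetric] using p by simp
  also have "\<dots> \<longleftrightarrow> (\<forall>n<l. x n = y n)"
    using m lt by (auto simp: not_le[symmetric])
  finally show ?thesis .
qed

lemma fdist_ge0: "fdist p x y \<ge> 0" by (simp add: fdist_def)

lemma fdist_le1: "p > 0 \<Longrightarrow> fdist p x y \<le> 1"
  by (auto simp: fdist_def powr_minus_divide intro!: ge_one_powr_ge_zero)

lemma fdist_blocks:
  assumes "\<forall>n<l. x n = a n" "\<forall>n<l. y n = b n" "\<exists>n<l. a n \<noteq> b n"
  shows "fdist p x y = fdist p a b"
proof -
  define m where "m = (LEAST n. a n \<noteq> b n)"
  have m: "a m \<noteq> b m" using assms(3) LeastI_ex[of "\<lambda>n. a n \<noteq> b n"] by (auto simp: m_def)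
  have lt: "\<And>i. i < m \<Longrightarrow> a i = b i" using not_less_Least m_def by blast
  have ml: "m < l" using assms(3) lt by (meson not_le order_less_le_trans)
  have xy: "x m \<noteq> y m" using assms ml m by auto
  have "(LEAST n. x n \<noteq> y n) = m"
  proof (rule Least_equality)
    show "x m \<noteq> y m" by fact
    fix n assume "x n \<noteq> y n"
    then show "m \<le> n" using lt assms ml by (metis le_less_linear order_less_trans)
  qed
  then show ?thesis using xy m by (auto simp: fdist_def m_def)
qed


lemma zp_of_nat_space: "0 < p \<Longrightarrow> zp_of_nat p I \<in> space (Zp p)"
  by (simp add: space_Zp zp_of_nat_def)

lemma modeq_digits:
  assumes p: "0 < (p::nat)"
  shows "I mod p ^ n = K mod p ^ n \<longleftrightarrow> (\<forall>i<n. zp_of_nat p I i = zp_of_nat p K i)"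
proof (induction n)
  case 0 then show ?case by simp
next
  case (Suc n)
  have e: "a mod p ^ Suc n = a mod p ^ n + p ^ n * (a div p ^ n mod p)" for a
    by (metis power_Suc2 mod_mult2_eq add.commute)
  have pn: "0 < p ^ n" using p by simp
  have "I mod p ^ Suc n = K mod p ^ Suc n \<longleftrightarrow>
        (I mod p ^ n = K mod p ^ n \<and> I div p ^ n mod p = K div p ^ n mod p)"
  proof
    assume h: "I mod p ^ Suc n = K mod p ^ Suc n"
    then have h': "I mod p ^ n + p ^ n * (I div p ^ n mod p) = K mod p ^ n + p ^ n * (K div p ^ n mod p)"
      by (simp only: e)
    have "(I mod p ^ n + p ^ n * (I div p ^ n mod p)) mod p ^ n = I mod p ^ n" by simp
    moreover have "(K mod p ^ n + p ^ n * (K div p ^ n mod p)) mod p ^ n = K mod p ^ n" by simp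
    ultimately have 1: "I mod p ^ n = K mod p ^ n" using h' by metis
    from h' have "(I mod p ^ n + p ^ n * (I div p ^ n mod p)) div p ^ n = (K mod p ^ n + p ^ n * (K div p ^ n mod p)) div p ^ n"
      by simp
    then have 2: "I div p ^ n mod p = K div p ^ n mod p" using pn by simp
    from 1 2 show "I mod p ^ n = K mod p ^ n \<and> I div p ^ n mod p = K div p ^ n mod p" ..
  next
    assume "I mod p ^ n = K mod p ^ n \<and> I div p ^ n mod p = K div p ^ n mod p"
    then show "I mod p ^ Suc n = K mod p ^ Suc n" by (simp only: e)
  qed
  also have "\<dots> \<longleftrightarrow> (\<forall>i<Suc n. zp_of_nat p I i = zp_of_nat p K i)"
    using Suc.IH by (auto simp: zp_of_nat_def less_Suc_eq)
  finally show ?case .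
qed

lemma digits_inj:
  assumes "0 < (p::nat)" "I < p ^ l" "K < p ^ l" "\<forall>i<l. zp_of_nat p I i = zp_of_nat p K i"
  shows "I = K"
  using modeq_digits[OF assms(1), of I l K] assms by simp

lemma digits_surj:
  assumes p: "0 < p" and x: "x \<in> space (Zp p)"
  shows "\<exists>I<p ^ l. \<forall>n<l. x n = zp_of_nat p I n"
proof -
  define f where "f I = restrict (zp_of_nat p I) {..<l}" for I
  have sub: "f ` {..<p ^ l} \<subseteq> PiE {..<l} (\<lambda>_. {..<p})"
    using p unfolding f_def image_subset_iff restrict_PiE_iff by (simp add: zp_of_nat_def)
  have inj: "inj_on f {..<p ^ l}"
  proof (rule inj_onI)
    fix I K assume "I \<in> {..<p ^ l}" "K \<in> {..<p ^ l}" "f I = f K"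
    then show "I = K" using digits_inj[OF p, of I l K]
      by (auto simp: f_def restrict_def fun_eq_iff split: if_splits)
  qed
  have "card (f ` {..<p ^ l}) = card (PiE {..<l} (\<lambda>_::nat. {..<p}))"
    using inj by (simp add: card_image card_PiE)
  then have eq: "f ` {..<p ^ l} = PiE {..<l} (\<lambda>_. {..<p})"
    using sub by (intro card_subset_eq) (auto simp: finite_PiE)
  have "restrict x {..<l} \<in> PiE {..<l} (\<lambda>_. {..<p})" using x by (auto simp: space_Zp)
  then obtain I where "I < p ^ l" "restrict x {..<l} = f I" unfolding eq[symmetric] by auto
  then show ?thesis
    by (intro exI[of _ I]) (auto simp: f_def fun_eq_iff restrict_def split: if_splits)
qed

lemma int_padic_norm_digits:
  assumes p: "1 < p" and IK: "I < p ^ l" "K < p ^ l" "I \<noteq> K"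
  shows "int_padic_norm p (int I - int K) = fdist p (zp_of_nat p I) (zp_of_nat p K)"
proof -
  have p0: "0 < p" using p by simp
  have ex: "\<not> (\<forall>n. zp_of_nat p I n = zp_of_nat p K n)"
    using digits_inj[OF p0 IK(1,2)] IK(3) by blast
  define m where "m = (LEAST n. zp_of_nat p I n \<noteq> zp_of_nat p K n)"
  have m: "zp_of_nat p I m \<noteq> zp_of_nat p K m"
    using ex LeastI_ex[of "\<lambda>n. zp_of_nat p I n \<noteq> zp_of_nat p K n"] by (auto simp: m_def)
  have lt: "\<And>i. i < m \<Longrightarrow> zp_of_nat p I i = zp_of_nat p K i" using not_less_Least m_def by blast
  have dvdiff: "(int p) ^ n dvd (int I - int K) \<longleftrightarrow> I mod p ^ n = K mod p ^ n" for n
  proof -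
    have "I mod p ^ n = K mod p ^ n \<longleftrightarrow> int (I mod p ^ n) = int (K mod p ^ n)" by (rule of_nat_eq_iff[symmetric])
    also have "\<dots> \<longleftrightarrow> int I mod (int p) ^ n = int K mod (int p) ^ n" by (simp only: of_nat_mod of_nat_power)
    also have "\<dots> \<longleftrightarrow> (int p) ^ n dvd (int I - int K)" by (rule mod_eq_dvd_iff)
    finally show ?thesis by (rule sym)
  qed
  have "multiplicity (int p) (int I - int K) = m"
  proof (rule multiplicity_eqI)
    show "int p ^ m dvd int I - int K" unfolding dvdiff modeq_digits[OF p0] using lt by blast
    show "\<not> int p ^ Suc m dvd int I - int K" unfolding dvdiff modeq_digits[OF p0] using m by blast
  qed
  moreover have "int I - int K \<noteq> 0" using IK(3) by simp
  ultimately show ?thesis unfolding int_padic_norm_def fdist_def if_not_P[OF ex] m_def[symmetric] by simp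
qed

lemma ball_char:
  assumes p: "1 < p" and x: "x \<in> space (Zp p)"
  shows "x \<in> zp_ball p l I \<longleftrightarrow> (\<forall>n<l. x n = zp_of_nat p I n)"
  using p x zp_of_nat_space[of p I]
  by (simp add: zp_ball_def zp_norm_sub fdist_le)

lemma ideal_char:
  assumes p: "1 < p" and x: "x \<in> space (Zp p)"
  shows "x \<in> zp_ideal p l \<longleftrightarrow> (\<forall>n<l. x n = 0)"
  using p x fdist_le[OF p, of "\<lambda>_. 0" x l] by (auto simp: zp_ideal_def zp_norm_fdist)

lemma ball_eq:
  assumes p: "1 < p"
  shows "zp_ball p l I = {x \<in> space (Zp p). \<forall>n<l. x n = zp_of_nat p I n}"
  using ball_char[OF p] by (auto simp: zp_ball_def)

lemma ideal_eq:
  assumes p: "1 < p"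
  shows "zp_ideal p l = {x \<in> space (Zp p). \<forall>n<l. x n = 0}"
  using ideal_char[OF p] by (auto simp: zp_ideal_def)

lemma ball_sets: "1 < p \<Longrightarrow> zp_ball p l I \<in> sets (Zp p)"
  by (simp add: ball_eq)

lemma ideal_sets: "1 < p \<Longrightarrow> zp_ideal p l \<in> sets (Zp p)"
  by (simp add: ideal_eq)

lemma ball_measure:
  assumes p: "1 < p"
  shows "measure (Zp p) (zp_ball p l I) = real p powr - real l"
proof -
  have "emeasure (Zp p) (zp_ball p l I) = ennreal (\<Prod>i\<in>{..<l}. real (card {zp_of_nat p I i}) / real p)"
  proof -
    have "zp_ball p l I = {x \<in> space (Zp p). \<forall>i\<in>{..<l}. x i \<in> {zp_of_nat p I i}}"
      unfolding ball_eq[OF p] by auto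
    then show ?thesis using p by (simp only:) (rule emeasure_Zp_cyl, auto simp: zp_of_nat_def)
  qed
  also have "\<dots> = ennreal (real p powr - real l)"
    using p by (simp add: powr_minus powr_realpow power_one_over inverse_eq_divide)
  finally show ?thesis by (simp add: measure_def)
qed

lemma cyl_sets1: "{y \<in> space (Zp p). \<forall>n. y n = x n} \<in> sets (Zp p)" by measurable
lemma cyl_sets2: "{y \<in> space (Zp p). (\<forall>i<m. y i = x i) \<and> \<not> y m = x m} \<in> sets (Zp p)" by measurable

lemma fdist_meas: "(\<lambda>y. h (fdist p x y)) \<in> borel_measurable (Zp p)"
proof -
  define g where "g y = (if \<forall>n. x n = y n then None else Some (LEAST n. x n \<noteq> y n))" for y
  have gm: "g \<in> measurable (Zp p) (count_space UNIV)"
    unfolding measurable_count_space_eq2_countable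
  proof (intro conjI ballI)
    show "g \<in> space (Zp p) \<rightarrow> UNIV" by simp
  next
    fix a :: "nat option"
    show "g -` {a} \<inter> space (Zp p) \<in> sets (Zp p)"
    proof (cases a)
      case None
      then have "g -` {a} \<inter> space (Zp p) = {y \<in> space (Zp p). \<forall>n. y n = x n}"
        by (auto simp: g_def split: if_splits)
      then show ?thesis by (simp only: cyl_sets1)
    next
      case (Some m)
      have gS: "g y = Some (LEAST n. x n \<noteq> y n)" if ne: "\<not> (\<forall>n. x n = y n)" for y
        unfolding g_def by (rule if_not_P[OF ne])
      have gN: "g y = None" if e: "\<forall>n. x n = y n" for y
        unfolding g_def by (rule if_P[OF e])
      have c: "g y = a \<longleftrightarrow> (\<forall>i<m. y i = x i) \<and> y m \<noteq> x m" for y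
      proof
        assume ga: "g y = a"
        have ne: "\<not> (\<forall>n. x n = y n)"
        proof
          assume "\<forall>n. x n = y n"
          then have "g y = None" by (rule gN)
          with ga Some show False by simp
        qed
        have mm: "(LEAST n. x n \<noteq> y n) = m" using gS[OF ne] ga Some by simp
        have ex: "\<exists>n. x n \<noteq> y n" using ne by blast
        have "x m \<noteq> y m" using LeastI_ex[OF ex] unfolding mm .
        moreover have "\<forall>i<m. y i = x i"
        proof (intro allI impI)
          fix i assume "i < m"
          then have "\<not> (x i \<noteq> y i)" unfolding mm[symmetric] by (rule not_less_Least)
          then show "y i = x i" by simp
        qed
        ultimately show "(\<forall>i<m. y i = x i) \<and> y m \<noteq> x m" by simp
      next
        assume a: "(\<forall>i<m. y i = x i) \<and> y m \<noteq> x m"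
        have ne: "\<not> (\<forall>n. x n = y n)" using a by metis
        have "(LEAST n. x n \<noteq> y n) = m"
        proof (rule Least_equality)
          show "x m \<noteq> y m" using a by simp
          fix n assume nn: "x n \<noteq> y n"
          show "m \<le> n"
          proof (rule ccontr)
            assume "\<not> m \<le> n"
            then have "n < m" by simp
            then have "y n = x n" using a by blast
            then show False using nn by simp
          qed
        qed
        then show "g y = a" using gS[OF ne] Some by simp
      qed
      have "g -` {a} \<inter> space (Zp p) = {y \<in> space (Zp p). (\<forall>i<m. y i = x i) \<and> \<not> y m = x m}"
      proof (rule set_eqI)
        fix y show "y \<in> g -` {a} \<inter> space (Zp p) \<longleftrightarrow> y \<in> {y \<in> space (Zp p). (\<forall>i<m. y i = x i) \<and> \<not> y m = x m}"
        proof -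
          have "y \<in> g -` {a} \<inter> space (Zp p) \<longleftrightarrow> y \<in> space (Zp p) \<and> g y = a" by blast
          also have "\<dots> \<longleftrightarrow> y \<in> space (Zp p) \<and> ((\<forall>i<m. y i = x i) \<and> y m \<noteq> x m)" by (simp only: c)
          also have "\<dots> \<longleftrightarrow> y \<in> {y \<in> space (Zp p). (\<forall>i<m. y i = x i) \<and> \<not> y m = x m}" by blast
          finally show ?thesis .
        qed
      qed
      then show ?thesis by (simp only: cyl_sets2)
    qed
  qed
  have eq: "(\<lambda>y. h (fdist p x y)) = (\<lambda>y. (\<lambda>ov. h (case ov of None \<Rightarrow> 0 | Some m \<Rightarrow> real p powr - real m)) (g y))"
    by (auto simp: fdist_def g_def fun_eq_iff)
  show ?thesis
    by (subst eq, rule measurable_compose[OF gm]) simp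
qed


lemma tr_space: "0 < p \<Longrightarrow> tr p x z \<in> space (Zp p)"
  by (simp add: tr_def space_Zp)

lemma tr_digit:
  assumes p: "0 < p" and xz: "x n < p" "z n < p"
  shows "(tr p x z n = x n) \<longleftrightarrow> z n = 0"
proof (cases "z n + x n < p")
  case True then show ?thesis by (simp add: tr_def)
next
  case False
  then have "(z n + x n) mod p = z n + x n - p"
    using xz by (simp add: le_mod_geq)
  then show ?thesis using False xz by (simp add: tr_def)
qed

lemma fdist_tr:
  assumes p: "0 < p" and x: "x \<in> space (Zp p)" and z: "z \<in> space (Zp p)"
  shows "fdist p x (tr p x z) = zp_norm p z"
proof -
  have e: "(x n = tr p x z n) = (0 = z n)" for n
    using tr_digit[OF p, of x n z] x z by (auto simp: space_Zp)
  show ?thesis unfolding zp_norm_fdist fdist_def e ..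
qed

lemma Jnorm_facts:
  assumes p: "1 < p" and Jnn: "\<forall>t\<in>{0..1}. J t \<ge> 0"
    and Jint: "(\<integral>\<^sup>+ x. ennreal (J (zp_norm p x)) \<partial>Zp p) = 1"
  shows "integrable (Zp p) (\<lambda>z. J (zp_norm p z))"
proof (rule integrableI_nonneg)
  show "(\<lambda>z. J (zp_norm p z)) \<in> borel_measurable (Zp p)"
    unfolding zp_norm_fdist by (rule fdist_meas)
  show "AE z in Zp p. 0 \<le> J (zp_norm p z)"
    using Jnn p fdist_ge0 fdist_le1 unfolding zp_norm_fdist by (intro AE_I2) auto
  show "(\<integral>\<^sup>+ x. ennreal (J (zp_norm p x)) \<partial>Zp p) < \<infinity>" using Jint by simp
qed

lemma diag_integral:
  fixes l :: nat
  assumes p: "1 < p" and Jnn: "\<forall>t\<in>{0..1}. J t \<ge> 0"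
    and Jint: "(\<integral>\<^sup>+ x. ennreal (J (zp_norm p x)) \<partial>Zp p) = 1"
    and x: "x \<in> space (Zp p)"
  defines "B \<equiv> {y \<in> space (Zp p). \<forall>n<l. y n = x n}"
  shows "integrable (Zp p) (\<lambda>y. J (fdist p x y) * indicator B y)"
    and "(\<integral>y. J (fdist p x y) * indicator B y \<partial>Zp p) = (\<integral>y. J (zp_norm p y) * indicator (zp_ideal p l) y \<partial>Zp p)"
proof -
  have p0: "0 < p" using p by simp
  have Bs: "B \<in> sets (Zp p)" unfolding B_def by measurable
  have fm: "(\<lambda>y. J (fdist p x y) * indicator B y) \<in> borel_measurable (Zp p)"
    by (rule borel_measurable_times[OF fdist_meas borel_measurable_indicator[OF Bs]])
  have D: "distr (Zp p) (Zp p) (tr p x) = Zp p" by (rule distr_tr[OF p0])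
  have comp: "J (fdist p x (tr p x z)) * indicator B (tr p x z) = J (zp_norm p z) * indicator (zp_ideal p l) z"
    if z: "z \<in> space (Zp p)" for z
  proof -
    have "tr p x z \<in> B \<longleftrightarrow> (\<forall>n<l. z n = 0)"
      using tr_digit[OF p0, of x _ z] x z tr_space[OF p0, of x z] by (auto simp: B_def space_Zp)
    also have "\<dots> \<longleftrightarrow> z \<in> zp_ideal p l" using ideal_char[OF p z] by simp
    finally show ?thesis using fdist_tr[OF p0 x z] by (simp add: indicator_def)
  qed
  have gi: "integrable (Zp p) (\<lambda>z. J (zp_norm p z) * indicator (zp_ideal p l) z)"
  proof -
    have "integrable (Zp p) (\<lambda>z. indicator (zp_ideal p l) z *\<^sub>R J (zp_norm p z))"
      by (rule integrable_mult_indicator[OF ideal_sets[OF p] Jnorm_facts[OF p Jnn Jint]])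
    then show ?thesis by (simp add: mult.commute)
  qed
  have "integrable (Zp p) (\<lambda>y. J (fdist p x y) * indicator B y) \<longleftrightarrow>
        integrable (distr (Zp p) (Zp p) (tr p x)) (\<lambda>y. J (fdist p x y) * indicator B y)"
    by (simp only: D)
  also have "\<dots> \<longleftrightarrow> integrable (Zp p) (\<lambda>z. J (fdist p x (tr p x z)) * indicator B (tr p x z))"
    by (rule integrable_distr_eq[OF tr_meas[OF p0] fm])
  also have "\<dots> \<longleftrightarrow> integrable (Zp p) (\<lambda>z. J (zp_norm p z) * indicator (zp_ideal p l) z)"
    by (rule Bochner_Integration.integrable_cong[OF refl comp])
  finally show "integrable (Zp p) (\<lambda>y. J (fdist p x y) * indicator B y)" using gi by simp
  have "(\<integral>y. J (fdist p x y) * indicator B y \<partial>Zp p) =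
        (\<integral>y. J (fdist p x y) * indicator B y \<partial>distr (Zp p) (Zp p) (tr p x))"
    by (simp only: D)
  also have "\<dots> = (\<integral>z. J (fdist p x (tr p x z)) * indicator B (tr p x z) \<partial>Zp p)"
    by (rule integral_distr[OF tr_meas[OF p0] fm])
  also have "\<dots> = (\<integral>y. J (zp_norm p y) * indicator (zp_ideal p l) y \<partial>Zp p)"
    by (rule Bochner_Integration.integral_cong[OF refl comp])
  finally show "(\<integral>y. J (fdist p x y) * indicator B y \<partial>Zp p) = (\<integral>y. J (zp_norm p y) * indicator (zp_ideal p l) y \<partial>Zp p)" .
qed

lemma offdiag_integral:
  assumes p: "1 < p" and x: "x \<in> space (Zp p)" and xI: "\<forall>n<l. x n = zp_of_nat p I n"
    and IK: "I < p ^ l" "K < p ^ l" "I \<noteq> K"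
  shows "integrable (Zp p) (\<lambda>y. J (fdist p x y) * indicator (zp_ball p l K) y)"
    and "(\<integral>y. J (fdist p x y) * indicator (zp_ball p l K) y \<partial>Zp p) = real p powr - real l * J (int_padic_norm p (int I - int K))"
proof -
  have p0: "0 < p" using p by simp
  interpret prob_space "Zp p" by (rule prob_Zp[OF p0])
  let ?c = "J (int_padic_norm p (int I - int K))"
  have dif: "\<exists>n<l. zp_of_nat p I n \<noteq> zp_of_nat p K n"
    using digits_inj[OF p0 IK(1,2)] IK(3) by blast
  have eq: "J (fdist p x y) * indicator (zp_ball p l K) y = ?c * indicator (zp_ball p l K) y"
    if y: "y \<in> space (Zp p)" for y
  proof (cases "y \<in> zp_ball p l K")
    case True
    then have "\<forall>n<l. y n = zp_of_nat p K n" using ball_char[OF p y] by simp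
    then have "fdist p x y = fdist p (zp_of_nat p I) (zp_of_nat p K)"
      using xI dif by (intro fdist_blocks) auto
    then show ?thesis using int_padic_norm_digits[OF p IK] by simp
  qed simp
  have ii: "integrable (Zp p) (\<lambda>y. ?c * indicator (zp_ball p l K) y)"
    using ball_sets[OF p] by (intro integrable_mult_right integrable_real_indicator) (auto simp: less_top[symmetric])
  show "integrable (Zp p) (\<lambda>y. J (fdist p x y) * indicator (zp_ball p l K) y)"
    using ii Bochner_Integration.integrable_cong[of "Zp p" "Zp p", OF refl eq] by simp
  have "(\<integral>y. J (fdist p x y) * indicator (zp_ball p l K) y \<partial>Zp p) = (\<integral>y. ?c * indicator (zp_ball p l K) y \<partial>Zp p)"
    by (rule Bochner_Integration.integral_cong[OF refl eq])
  also have "\<dots> = ?c * measure (Zp p) (zp_ball p l K)"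
    using ball_sets[OF p] by (simp add: Int_absorb2 sets.sets_into_space)
  also have "\<dots> = real p powr - real l * ?c" by (simp add: ball_measure[OF p])
  finally show "(\<integral>y. J (fdist p x y) * indicator (zp_ball p l K) y \<partial>Zp p) = real p powr - real l * ?c" .
qed

lemma phi_val:
  assumes p: "1 < p" and x: "x \<in> space (Zp p)" and I: "I < p ^ l" and xI: "\<forall>n<l. x n = zp_of_nat p I n"
  shows "(\<Sum>K<p ^ l. c K * indicator (zp_ball p l K) x) = (c I :: complex)"
proof -
  have p0: "0 < p" using p by simp
  have "(\<Sum>K<p ^ l. c K * indicator (zp_ball p l K) x) = (\<Sum>K<p ^ l. if K = I then c I else 0)"
  proof (rule sum.cong[OF refl])
    fix K assume K: "K \<in> {..<p ^ l}"
    have "x \<in> zp_ball p l K \<longleftrightarrow> K = I"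
    proof
      assume "x \<in> zp_ball p l K"
      then have "\<forall>n<l. x n = zp_of_nat p K n" using ball_char[OF p x] by simp
      then show "K = I" using digits_inj[OF p0, of K l I] K I xI by auto
    qed (use ball_char[OF p x] xI in simp)
    then show "c K * indicator (zp_ball p l K) x = (if K = I then c I else 0)" by auto
  qed
  also have "\<dots> = c I" using I by simp
  finally show ?thesis .
qed

lemma Jop_val:
  assumes p: "1 < p" and Jnn: "\<forall>t\<in>{0..1}. J t \<ge> 0"
    and Jint: "(\<integral>\<^sup>+ x. ennreal (J (zp_norm p x)) \<partial>Zp p) = 1"
    and phi: "\<forall>y\<in>space (Zp p). \<phi> y = (\<Sum>K<p ^ l. c K * indicator (zp_ball p l K) y)"
    and x: "x \<in> space (Zp p)" and I: "I < p ^ l" and xI: "\<forall>n<l. x n = zp_of_nat p I n"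
  shows "Jop p J \<phi> x = (\<Sum>K<p ^ l. complex_of_real (Jmat p l J I K) * c K)"
proof -
  have p0: "0 < p" using p by simp
  define f where "f K y = J (fdist p x y) * indicator (zp_ball p l K) y" for K y
  have BI: "zp_ball p l I = {y \<in> space (Zp p). \<forall>n<l. y n = x n}"
    unfolding ball_eq[OF p] using xI by auto
  have fint: "integrable (Zp p) (f K)" and fval: "integral\<^sup>L (Zp p) (f K) = Jmat p l J I K + (if K = I then 1 else 0)"
    if K: "K < p ^ l" for K
  proof -
    have "integrable (Zp p) (f K) \<and> integral\<^sup>L (Zp p) (f K) = Jmat p l J I K + (if K = I then 1 else 0)"
    proof (cases "K = I")
      case True
      show ?thesis
        using diag_integral[OF p Jnn Jint x, of l] True
        unfolding f_def BI[symmetric] by (simp add: Jmat_def)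
    next
      case False
      show ?thesis
        using offdiag_integral[OF p x xI I K, of J] False \<open>K \<noteq> I\<close>
        unfolding f_def by (simp add: Jmat_def)
    qed
    then show "integrable (Zp p) (f K)" "integral\<^sup>L (Zp p) (f K) = Jmat p l J I K + (if K = I then 1 else 0)"
      by auto
  qed
  have "(\<integral>y. complex_of_real (J (zp_norm p (zp_sub p x y))) * \<phi> y \<partial>Zp p)
      = (\<integral>y. (\<Sum>K<p ^ l. c K * complex_of_real (f K y)) \<partial>Zp p)"
  proof (rule Bochner_Integration.integral_cong[OF refl])
    fix y assume y: "y \<in> space (Zp p)"
    have "complex_of_real (J (zp_norm p (zp_sub p x y))) * \<phi> y
        = (\<Sum>K<p ^ l. complex_of_real (J (fdist p x y)) * (c K * indicator (zp_ball p l K) y))"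
      using phi y by (simp only: zp_norm_sub[OF p x y] sum_distrib_left)
    also have "\<dots> = (\<Sum>K<p ^ l. c K * complex_of_real (f K y))"
      by (intro sum.cong refl) (simp add: f_def indicator_def)
    finally show "complex_of_real (J (zp_norm p (zp_sub p x y))) * \<phi> y = (\<Sum>K<p ^ l. c K * complex_of_real (f K y))" .
  qed
  also have "\<dots> = (\<Sum>K<p ^ l. c K * complex_of_real (integral\<^sup>L (Zp p) (f K)))"
  proof -
    have "(\<integral>y. (\<Sum>K<p ^ l. c K * complex_of_real (f K y)) \<partial>Zp p) = (\<Sum>K<p ^ l. (\<integral>y. c K * complex_of_real (f K y) \<partial>Zp p))"
      by (rule Bochner_Integration.integral_sum) (auto intro!: integrable_mult_right fint)
    then show ?thesis by simp
  qed
  also have "\<dots> = (\<Sum>K<p ^ l. c K * complex_of_real (Jmat p l J I K) + (if K = I then c K else 0))"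
    by (intro sum.cong refl) (simp add: fval algebra_simps)
  also have "\<dots> = (\<Sum>K<p ^ l. complex_of_real (Jmat p l J I K) * c K) + c I"
    using I by (simp add: sum.distrib mult.commute)
  finally have int: "(\<integral>y. complex_of_real (J (zp_norm p (zp_sub p x y))) * \<phi> y \<partial>Zp p) =
      (\<Sum>K<p ^ l. complex_of_real (Jmat p l J I K) * c K) + c I" .
  have "\<phi> x = c I" using phi x phi_val[OF p x I xI, of c] by simp
  then show ?thesis unfolding Jop_def using int by simp
qed

theorem lemma9:
  fixes p l :: nat and J :: "real \<Rightarrow> real"
  assumes "prime p" and "l \<ge> 1"
    and "\<forall>t\<in>{0..1}. J t \<ge> 0"
    and "(\<integral>\<^sup>+ x. ennreal (J (zp_norm p x)) \<partial>Zp p) = 1"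
  shows "(\<forall>\<phi>\<in>Dl p l. Jop p J \<phi> \<in> Dl p l) \<and>
         (\<forall>\<phi>\<in>Dl p l. \<forall>I<p ^ l.
            Jop p J \<phi> (zp_of_nat p I) =
              (\<Sum>K<p ^ l. complex_of_real (Jmat p l J I K) * \<phi> (zp_of_nat p K)))"
proof (intro conjI ballI allI impI)
  have p: "1 < p" using prime_gt_1_nat[OF assms(1)] .
  have p0: "0 < p" using p by simp
  {
    fix \<phi> assume "\<phi> \<in> Dl p l"
    then obtain c where phi: "\<forall>y\<in>space (Zp p). \<phi> y = (\<Sum>K<p ^ l. c K * indicator (zp_ball p l K) y)"
      unfolding Dl_def by blast
    define c' where "c' I = (\<Sum>K<p ^ l. complex_of_real (Jmat p l J I K) * c K)" for I
    have "\<forall>x\<in>space (Zp p). Jop p J \<phi> x = (\<Sum>I<p ^ l. c' I * indicator (zp_ball p l I) x)"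
    proof
      fix x assume x: "x \<in> space (Zp p)"
      obtain I where I: "I < p ^ l" and xI: "\<forall>n<l. x n = zp_of_nat p I n"
        using digits_surj[OF p0 x] by blast
      show "Jop p J \<phi> x = (\<Sum>I<p ^ l. c' I * indicator (zp_ball p l I) x)"
        using Jop_val[OF p assms(3,4) phi x I xI] phi_val[OF p x I xI, of c'] by (simp add: c'_def)
    qed
    then show "Jop p J \<phi> \<in> Dl p l" unfolding Dl_def by blast
  next
    fix \<phi> I assume "\<phi> \<in> Dl p l" and I: "I < p ^ l"
    then obtain c where phi: "\<forall>y\<in>space (Zp p). \<phi> y = (\<Sum>K<p ^ l. c K * indicator (zp_ball p l K) y)"
      unfolding Dl_def by blast
    have cK: "\<phi> (zp_of_nat p K) = c K" if "K < p ^ l" for K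
      using phi zp_of_nat_space[OF p0, of K] phi_val[OF p zp_of_nat_space[OF p0, of K] that, of c] by simp
    show "Jop p J \<phi> (zp_of_nat p I) = (\<Sum>K<p ^ l. complex_of_real (Jmat p l J I K) * \<phi> (zp_of_nat p K))"
      using Jop_val[OF p assms(3,4) phi zp_of_nat_space[OF p0, of I] I] cK by simp
  }
qed

end
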